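(* The following hold. (1) $\alpha_*(\Sigma^* )=\mathcal Q$ and $\alpha_{\le\omega}(\Sigma^{\le\omega})=\mathcal C$ (top elements are preserved); $\alpha_*(\emptyset)=\emptyset$ and $\alpha_{\le\omega}(\emptyset)=\emptyset$. (2) For $U,U'\subseteq\Sigma^*$ and $V,V'\subseteq\Sigma^{\le\omega}$: $\alpha_*(U\cup U')=\alpha_*(U)\cup\alpha_*(U')$ and $\alpha_{\le\omega}(V\cup V')=\alpha_{\le\omega}(V)\cup\alpha_{\le\omega}(V')$. (3) $\alpha_*(U\cdot U')=\alpha_*(U)\cdot\alpha_*(U')$ and $\alpha_{\le\omega}(U\cdot V)=\alpha_*(U)\cdot\alpha_{\le\omega}(V)$. (4) If $n\ge1$, $\Phi$ is a monotone operator on $\mathcal P(\Sigma^* )^n$, $F$ is a monotone operator on $\mathcal M_*^n$, and $\alpha_*\circ\Phi=F\circ\alpha_*$ (with $\alpha_*$ applied componentwise), then $\alpha_*(\mathrm{lfp}(\Phi))=\mathrm{lfp}(F)$. (5) For every $U\subseteq\Sigma^*$: $\alpha_{\le\omega}(U^\omega)=\alpha_*(U)^\omega$.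
   Context: $\Sigma$ is a finite alphabet, $\Sigma^{\le\omega}=\Sigma^*\cup\Sigma^\omega$; concatenation $w\cdot u$ equals $wu$ if $w$ is finite and $w$ if $w$ is infinite, extended pointwise to languages. For $A\subseteq\Sigma^*$, $A^\omega$ is the set of all words $w_0w_1w_2\cdots$ with $w_i\in A$, and $CD^\omega$ means $C\cdot D^\omega$. Fix an extended Büchi automaton $\mathfrak A=(Q,\Sigma,\delta,q_0,F)$ (finite states, $\delta:Q\times\Sigma\to\mathcal P(Q)$, initial $q_0$, final $F$). For $w\in\Sigma^*$ write $p\overset{w}{\leadsto}q$ if $q$ is reachable from $p$ reading $w$, and $p\overset{w}{\leadsto}_F q$ if there are $q''\in F$, $w=uv$ with $p\overset{u}{\leadsto}q''\overset{v}{\leadsto}q$. For $w,u\in\Sigma^+$, $w\sim u$ iff for all $p,q$: $p\overset{w}{\leadsto}q\Leftrightarrow p\overset{u}{\leadsto}q$ and $p\overset{w}{\leadsto}_Fq\Leftrightarrow p\overset{u}{\leadsto}_Fq$. $\mathcal Q=\Sigma^+/{\sim}\uplus\{[\epsilon]\}$ with $[\epsilon]=\{\epsilon\}$; concatenation of classes is well defined. Let $\mathcal C=\{(C,D)\mid C,D\in\mathcal Q,\ CD=C,\ DD=D\}$. Define $\mathfrak f(V)=\{(C,D)\in\mathcal C\mid CD^\omega\cap V\neq\emptyset\}$ and $\mathfrak g(\mathcal V)=\bigcup_{(C,D)\in\mathcal V}CD^\omega$; closure $\mathfrak c(\mathcal V)=\bigcup_{n\ge1}(\mathfrak f\circ\mathfrak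 g)^n(\mathcal V)$. $\mathcal M_{\le\omega}=\{\mathfrak c(\mathfrak f(V))\mid V\subseteq\Sigma^{\le\omega}\}$, $\mathcal M_*=\mathcal P(\mathcal Q)$, ordered by inclusion. $\alpha_*(U)=\{C\in\mathcal Q\mid C\cap U\neq\emptyset\}$, $\alpha_{\le\omega}(V)=\mathfrak c(\mathfrak f(V))$, $\gamma_*(\mathcal U)=\bigcup_{C\in\mathcal U}C$, $\gamma_{\le\omega}(\mathcal V)=\mathfrak g(\mathcal V)$. Abstract operations: for $\mathcal U,\mathcal U'\in\mathcal M_*$, $\mathcal U\cdot\mathcal U'=\{CC'\mid C\in\mathcal U,C'\in\mathcal U'\}$; for $\mathcal U\in\mathcal M_*$, $\mathcal V\in\mathcal M_{\le\omega}$, $\mathcal U\cdot\mathcal V=\{(AC,D)\mid A\in\mathcal U,(C,D)\in\mathcal V\}$; for $\mathcal U\in\mathcal M_*$, $\mathcal U^\omega:=\alpha_{\le\omega}(\gamma_*(\mathcal U)^\omega)$. *)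

theory Defs
  imports Main
begin

datatype 'a fiword = FinW "'a list" | InfW "nat \<Rightarrow> 'a"

fun wcat :: "'a fiword \<Rightarrow> 'a fiword \<Rightarrow> 'a fiword" where
  "wcat (FinW u) (FinW v) = FinW (u @ v)"
| "wcat (FinW u) (InfW x) = InfW (\<lambda>k. if k < length u then u ! k else x (k - length u))"
| "wcat (InfW x) _ = InfW x"

definition lmul :: "'a list set \<Rightarrow> 'a list set \<Rightarrow> 'a list set" where
  "lmul U U' = {u @ v | u v. u \<in> U \<and> v \<in> U'}"

definition lconc :: "'a list set \<Rightarrow> 'a fiword set \<Rightarrow> 'a fiword set" where
  "lconc U V = {wcat (FinW u) v | u v. u \<in> U \<and> v \<in> V}"

definition pconc :: "(nat \<Rightarrow> 'a list) \<Rightarrow> nat \<Rightarrow> 'a list" where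
  "pconc ws n = concat (map ws [0..<n])"

definition inf_concat :: "(nat \<Rightarrow> 'a list) \<Rightarrow> 'a fiword" where
  "inf_concat ws =
     (if \<exists>n. \<forall>i\<ge>n. ws i = []
      then FinW (pconc ws (LEAST n. \<forall>i\<ge>n. ws i = []))
      else InfW (\<lambda>k. pconc ws (LEAST n. k < length (pconc ws n)) ! k))"

definition omega_pow :: "'a list set \<Rightarrow> 'a fiword set" where
  "omega_pow A = {inf_concat ws | ws. \<forall>i. ws i \<in> A}"

fun steps :: "('s \<Rightarrow> 'a \<Rightarrow> 's set) \<Rightarrow> 's \<Rightarrow> 'a list \<Rightarrow> 's set" where
  "steps d p [] = {p}"
| "steps d p (a # w) = (\<Union>q\<in>d p a. steps d q w)"

definition reach :: "('s \<Rightarrow> 'a \<Rightarrow> 's set) \<Rightarrow> 's \<Rightarrow> 'a list \<Rightarrow> 's \<Rightarrow> bool" where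
  "reach d p w q \<longleftrightarrow> q \<in> steps d p w"

definition reachF :: "('s \<Rightarrow> 'a \<Rightarrow> 's set) \<Rightarrow> 's set \<Rightarrow> 's \<Rightarrow> 'a list \<Rightarrow> 's \<Rightarrow> bool" where
  "reachF d Fs p w q \<longleftrightarrow>
     (\<exists>u v q''. w = u @ v \<and> q'' \<in> Fs \<and> reach d p u q'' \<and> reach d q'' v q)"

definition sim :: "('s \<Rightarrow> 'a \<Rightarrow> 's set) \<Rightarrow> 's set \<Rightarrow> 'a list \<Rightarrow> 'a list \<Rightarrow> bool" where
  "sim d Fs w u \<longleftrightarrow>
     (\<forall>p q. (reach d p w q \<longleftrightarrow> reach d p u q) \<and> (reachF d Fs p w q \<longleftrightarrow> reachF d Fs p u q))"

definition cls :: "('s \<Rightarrow> 'a \<Rightarrow> 's set) \<Rightarrow> 's set \<Rightarrow> 'a list \<Rightarrow> 'a list set" where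
  "cls d Fs w = (if w = [] then {[]} else {u. u \<noteq> [] \<and> sim d Fs w u})"

definition Qc :: "('s \<Rightarrow> 'a \<Rightarrow> 's set) \<Rightarrow> 's set \<Rightarrow> 'a list set set" where
  "Qc d Fs = range (cls d Fs)"

text \<open>Concatenation of classes (well defined: the class of uv for representatives u, v).\<close>
definition cmul :: "('s \<Rightarrow> 'a \<Rightarrow> 's set) \<Rightarrow> 's set \<Rightarrow> 'a list set \<Rightarrow> 'a list set \<Rightarrow> 'a list set" where
  "cmul d Fs C D = cls d Fs ((SOME u. u \<in> C) @ (SOME v. v \<in> D))"

definition Cpairs :: "('s \<Rightarrow> 'a \<Rightarrow> 's set) \<Rightarrow> 's set \<Rightarrow> ('a list set \<times> 'a list set) set" where
  "Cpairs d Fs = {(C, D). C \<in> Qc d Fs \<and> D \<in> Qc d Fs \<and> cmul d Fs C D = C \<and> cmul d Fs D D = D}"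

definition ff :: "('s \<Rightarrow> 'a \<Rightarrow> 's set) \<Rightarrow> 's set \<Rightarrow> 'a fiword set \<Rightarrow> ('a list set \<times> 'a list set) set" where
  "ff d Fs V = {(C, D) \<in> Cpairs d Fs. lconc C (omega_pow D) \<inter> V \<noteq> {}}"

definition gg :: "('a list set \<times> 'a list set) set \<Rightarrow> 'a fiword set" where
  "gg \<V> = (\<Union>(C, D)\<in>\<V>. lconc C (omega_pow D))"

definition cc :: "('s \<Rightarrow> 'a \<Rightarrow> 's set) \<Rightarrow> 's set \<Rightarrow> ('a list set \<times> 'a list set) set \<Rightarrow> ('a list set \<times> 'a list set) set" where
  "cc d Fs \<V> = (\<Union>n\<in>{1..}. ((ff d Fs \<circ> gg) ^^ n) \<V>)"

definition alpha_star :: "('s \<Rightarrow> 'a \<Rightarrow> 's set) \<Rightarrow> 's set \<Rightarrow> 'a list set \<Rightarrow> 'a list set set" where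
  "alpha_star d Fs U = {C \<in> Qc d Fs. C \<inter> U \<noteq> {}}"

definition alpha_om :: "('s \<Rightarrow> 'a \<Rightarrow> 's set) \<Rightarrow> 's set \<Rightarrow> 'a fiword set \<Rightarrow> ('a list set \<times> 'a list set) set" where
  "alpha_om d Fs V = cc d Fs (ff d Fs V)"

definition gamma_star :: "'a list set set \<Rightarrow> 'a list set" where
  "gamma_star \<U> = \<Union>\<U>"

definition gamma_om :: "('a list set \<times> 'a list set) set \<Rightarrow> 'a fiword set" where
  "gamma_om \<V> = gg \<V>"

definition M_star :: "('s \<Rightarrow> 'a \<Rightarrow> 's set) \<Rightarrow> 's set \<Rightarrow> 'a list set set set" where
  "M_star d Fs = Pow (Qc d Fs)"

definition M_om :: "('s \<Rightarrow> 'a \<Rightarrow> 's set) \<Rightarrow> 's set \<Rightarrow> ('a list set \<times> 'a list set) set set" where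
  "M_om d Fs = range (alpha_om d Fs)"

definition amul :: "('s \<Rightarrow> 'a \<Rightarrow> 's set) \<Rightarrow> 's set \<Rightarrow> 'a list set set \<Rightarrow> 'a list set set \<Rightarrow> 'a list set set" where
  "amul d Fs \<U> \<U>' = {cmul d Fs C C' | C C'. C \<in> \<U> \<and> C' \<in> \<U>'}"

definition amul_om :: "('s \<Rightarrow> 'a \<Rightarrow> 's set) \<Rightarrow> 's set \<Rightarrow> 'a list set set
    \<Rightarrow> ('a list set \<times> 'a list set) set \<Rightarrow> ('a list set \<times> 'a list set) set" where
  "amul_om d Fs \<U> \<V> = {(cmul d Fs A C, D) | A C D. A \<in> \<U> \<and> (C, D) \<in> \<V>}"

definition aomega :: "('s \<Rightarrow> 'a \<Rightarrow> 's set) \<Rightarrow> 's set \<Rightarrow> 'a list set set \<Rightarrow> ('a list set \<times> 'a list set) set" where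
  "aomega d Fs \<U> = alpha_om d Fs (omega_pow (gamma_star \<U>))"

end

theory Submission
  imports Defs "HOL-Library.Ramsey" "HOL-Library.Infinite_Set"
begin

context fixes d :: "'s \<Rightarrow> 'a \<Rightarrow> 's set" and Fs :: "'s set"
begin

definition RR :: "'a list \<Rightarrow> ('s \<times> 's) set" where "RR w = {(p,q). reach d p w q}"
definition RF :: "'a list \<Rightarrow> ('s \<times> 's) set" where "RF w = {(p,q). reachF d Fs p w q}"
definition key :: "'a list \<Rightarrow> (('s \<times> 's) set \<times> ('s \<times> 's) set) option" where
  "key w = (if w = [] then None else Some (RR w, RF w))"

lemma steps_append: "steps d p (u @ v) = (\<Union>m\<in>steps d p u. steps d m v)"
  by (induction u arbitrary: p) auto

lemma reach_append: "reach d p (u @ v) q \<longleftrightarrow> (\<exists>m. reach d p u m \<and> reach d m v q)"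
  unfolding reach_def steps_append by auto

lemma reachF_append: "reachF d Fs p (u @ v) q \<longleftrightarrow>
   (\<exists>m. (reachF d Fs p u m \<and> reach d m v q) \<or> (reach d p u m \<and> reachF d Fs m v q))"
proof
  assume "reachF d Fs p (u @ v) q"
  then obtain x y q'' where e: "u @ v = x @ y" and f: "q'' \<in> Fs" "reach d p x q''" "reach d q'' y q"
    unfolding reachF_def by blast
  have e': "(\<exists>t. x = u @ t \<and> v = t @ y) \<or> (\<exists>t. u = x @ t \<and> y = t @ v)"
    using e by (auto simp: append_eq_append_conv2)
  then show "\<exists>m. (reachF d Fs p u m \<and> reach d m v q) \<or> (reach d p u m \<and> reachF d Fs m v q)"
  proof
    assume "\<exists>t. x = u @ t \<and> v = t @ y"
    then obtain t where t: "x = u @ t" "v = t @ y" by blast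
    with f obtain m where m: "reach d p u m" "reach d m t q''" using reach_append by metis
    have "reachF d Fs m v q" unfolding reachF_def using m f t by blast
    with m show ?thesis by blast
  next
    assume "\<exists>t. u = x @ t \<and> y = t @ v"
    then obtain t where t: "u = x @ t" "y = t @ v" by blast
    with f obtain m where m: "reach d q'' t m" "reach d m v q" using reach_append by metis
    have "reachF d Fs p u m" unfolding reachF_def using m f t by blast
    with m show ?thesis by blast
  qed
next
  assume "\<exists>m. (reachF d Fs p u m \<and> reach d m v q) \<or> (reach d p u m \<and> reachF d Fs m v q)"
  then obtain m where "(reachF d Fs p u m \<and> reach d m v q) \<or> (reach d p u m \<and> reachF d Fs m v q)" by blast
  then show "reachF d Fs p (u @ v) q"
  proof
    assume "reachF d Fs p u m \<and> reach d m v q"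
    then obtain x y q'' where "u = x @ y" "q'' \<in> Fs" "reach d p x q''" "reach d q'' y m" "reach d m v q"
      unfolding reachF_def by blast
    then show ?thesis unfolding reachF_def using reach_append[of q'' y v q]
      by (metis append.assoc)
  next
    assume "reach d p u m \<and> reachF d Fs m v q"
    then obtain x y q'' where "v = x @ y" "q'' \<in> Fs" "reach d m x q''" "reach d q'' y q" "reach d p u m"
      unfolding reachF_def by blast
    then show ?thesis unfolding reachF_def using reach_append[of p u x q'']
      by (metis append.assoc)
  qed
qed

definition kmul where
  "kmul k1 k2 = (case k1 of None \<Rightarrow> k2 | Some (a,b) \<Rightarrow> (case k2 of None \<Rightarrow> Some (a,b)
     | Some (c,e) \<Rightarrow> Some (a O c, b O c \<union> a O e)))"

lemma key_append: "key (u @ v) = kmul (key u) (key v)"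
proof -
  have "RR (u @ v) = RR u O RR v" unfolding RR_def using reach_append by auto
  moreover have "RF (u @ v) = RF u O RR v \<union> RR u O RF v"
    unfolding RR_def RF_def using reachF_append by auto
  ultimately show ?thesis unfolding key_def kmul_def
    by (cases "u = []"; cases "v = []") auto
qed

lemma cls_key: "cls d Fs w = {u. key u = key w}"
  unfolding cls_def key_def sim_def RR_def RF_def by (auto simp: set_eq_iff)

lemma mem_cls: "u \<in> cls d Fs w \<longleftrightarrow> key u = key w" by (simp add: cls_key)
lemma cls_eq: "cls d Fs u = cls d Fs w \<longleftrightarrow> key u = key w" by (auto simp: cls_key)
lemma self_cls: "w \<in> cls d Fs w" by (simp add: cls_key)
lemma key_Nil: "key u = key [] \<longleftrightarrow> u = []" by (simp add: key_def)

lemma mem_cls_eq: "u \<in> cls d Fs w \<Longrightarrow> cls d Fs u = cls d Fs w"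
  by (simp add: cls_eq mem_cls)

lemma Qc_E: "C \<in> Qc d Fs \<Longrightarrow> (\<And>w. C = cls d Fs w \<Longrightarrow> P) \<Longrightarrow> P"
  unfolding Qc_def by blast

lemma cls_Qc[simp]: "cls d Fs w \<in> Qc d Fs" unfolding Qc_def by simp

lemma cmul_cls: "cmul d Fs (cls d Fs u) (cls d Fs v) = cls d Fs (u @ v)"
proof -
  have a: "(SOME x. x \<in> cls d Fs u) \<in> cls d Fs u" by (rule someI, rule self_cls)
  have b: "(SOME x. x \<in> cls d Fs v) \<in> cls d Fs v" by (rule someI, rule self_cls)
  show ?thesis using a b unfolding cmul_def cls_eq mem_cls key_append by simp
qed

lemma mem_cmul: assumes "x \<in> C" "y \<in> D" "C \<in> Qc d Fs" "D \<in> Qc d Fs"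
  shows "x @ y \<in> cmul d Fs C D"
proof -
  have "C = cls d Fs x" using assms(1,3) by (auto elim!: Qc_E simp: mem_cls_eq)
  moreover have "D = cls d Fs y" using assms(2,4) by (auto elim!: Qc_E simp: mem_cls_eq)
  ultimately show ?thesis by (simp add: cmul_cls self_cls)
qed

lemma cmul_Qc: "C \<in> Qc d Fs \<Longrightarrow> D \<in> Qc d Fs \<Longrightarrow> cmul d Fs C D \<in> Qc d Fs"
  by (auto elim!: Qc_E simp: cmul_cls)

lemma cmul_assoc: "A \<in> Qc d Fs \<Longrightarrow> C \<in> Qc d Fs \<Longrightarrow> D \<in> Qc d Fs \<Longrightarrow>
   cmul d Fs (cmul d Fs A C) D = cmul d Fs A (cmul d Fs C D)"
  by (auto elim!: Qc_E simp: cmul_cls)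

lemma cls_Nil: "cls d Fs [] = {[]}" by (simp add: cls_def)

lemma Qc_Nil: "D \<in> Qc d Fs \<Longrightarrow> [] \<in> D \<longleftrightarrow> D = {[]}"
proof (erule Qc_E)
  fix w assume D: "D = cls d Fs w"
  show ?thesis
  proof
    assume "[] \<in> D" then have "D = cls d Fs []" using D mem_cls_eq by auto
    then show "D = {[]}" by (simp add: cls_Nil)
  qed simp
qed

lemma cmul_Nil: "C \<in> Qc d Fs \<Longrightarrow> cmul d Fs C {[]} = C"
  by (auto elim!: Qc_E simp: cmul_cls cls_Nil[symmetric])
lemma Nil_cmul: "C \<in> Qc d Fs \<Longrightarrow> cmul d Fs {[]} C = C"
  by (auto elim!: Qc_E simp: cmul_cls cls_Nil[symmetric])

lemma Qc_nonNil: "D \<in> Qc d Fs \<Longrightarrow> D \<noteq> {[]} \<Longrightarrow> x \<in> D \<Longrightarrow> x \<noteq> []"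
  using Qc_Nil by blast

lemma Qc_ne: "C \<in> Qc d Fs \<Longrightarrow> \<exists>x. x \<in> C"
  by (auto elim!: Qc_E intro: self_cls)

end

lemma finite_Qc: "finite (Qc (d :: 's::finite \<Rightarrow> 'a \<Rightarrow> 's set) Fs)"
proof -
  have "Qc d Fs = (\<lambda>k. {u. key d Fs u = k}) ` range (key d Fs)" unfolding Qc_def by (auto simp: cls_key)
  moreover have "finite (range (key d Fs))" by (rule finite_subset[OF subset_UNIV finite_UNIV])
  ultimately show ?thesis by simp
qed


definition seg :: "(nat \<Rightarrow> 'a) \<Rightarrow> nat \<Rightarrow> nat \<Rightarrow> 'a list" where "seg g i j = map g [i..<j]"
definition sh :: "'a list \<Rightarrow> (nat \<Rightarrow> 'a) \<Rightarrow> nat \<Rightarrow> 'a" where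
  "sh x h = (\<lambda>k. if k < length x then x ! k else h (k - length x))"

lemma wcat_fin_inf: "wcat (FinW x) (InfW h) = InfW (sh x h)" by (simp add: sh_def)

lemma sh_append: "sh (a @ x) h = sh a (sh x h)"
  by (auto simp: sh_def nth_append fun_eq_iff)

lemma wcat_assoc: "wcat (FinW a) (wcat (FinW x) v) = wcat (FinW (a @ x)) v"
  by (cases v) (simp_all add: wcat_fin_inf[symmetric] sh_append[symmetric, unfolded sh_def])

lemma seg_append: "i \<le> j \<Longrightarrow> j \<le> k \<Longrightarrow> seg g i j @ seg g j k = seg g i k"
proof -
  assume "i \<le> j" "j \<le> k"
  then have "[i..<k] = [i..<j] @ [j..<k]" using upt_add_eq_append[of i j "k - j"] by simp
  then show ?thesis unfolding seg_def by simp
qed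

lemma length_seg[simp]: "length (seg g i j) = j - i" by (simp add: seg_def)

lemma seg_sh0: "seg (sh x h) 0 (length x + k) = x @ seg h 0 k"
  by (rule nth_equalityI) (auto simp: seg_def sh_def nth_append)

lemma seg_sh: "seg (sh x h) (length x + i) (length x + k) = seg h i k"
  by (rule nth_equalityI) (auto simp: seg_def sh_def)

lemma seg_shift: "seg (\<lambda>k. g (k + m)) i j = seg g (i + m) (j + m)"
  by (rule nth_equalityI) (auto simp: seg_def add.commute add.left_commute)

lemma seg_eq_fun:
  assumes "\<And>n. seg g 0 (b n) = seg g' 0 (b n)" "\<And>k. \<exists>n. k < b n"
  shows "g = g'"
proof
  fix k obtain n where "k < b n" using assms(2) by blast
  then have "seg g 0 (b n) ! k = seg g' 0 (b n) ! k" using assms(1) by simp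
  with \<open>k < b n\<close> show "g k = g' k" by (simp add: seg_def)
qed

lemma pconc_Suc: "pconc ws (Suc n) = pconc ws n @ ws n" by (simp add: pconc_def)
lemma pconc_0[simp]: "pconc ws 0 = []" by (simp add: pconc_def)

lemma pconc_le: "m \<le> n \<Longrightarrow> pconc ws n = pconc ws m @ concat (map ws [m..<n])"
proof -
  assume "m \<le> n"
  then have "[0..<n] = [0..<m] @ [m..<n]" using upt_add_eq_append[of 0 m "n - m"] by simp
  then show ?thesis unfolding pconc_def by simp
qed

lemma len_unbounded:
  assumes "\<forall>n. \<exists>i\<ge>n. ws i \<noteq> []"
  shows "\<exists>n. k < length (pconc ws n)"
proof (induction k)
  case 0
  obtain i where "ws i \<noteq> []" using assms by blast
  then show ?case by (intro exI[of _ "Suc i"]) (simp add: pconc_Suc)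
next
  case (Suc k)
  then obtain n where n: "k < length (pconc ws n)" by blast
  obtain i where i: "i \<ge> n" "ws i \<noteq> []" using assms by blast
  have "pconc ws (Suc i) = pconc ws n @ concat (map ws [n..<i]) @ ws i"
    using pconc_le[of n i ws] i by (simp add: pconc_Suc)
  then have "length (pconc ws (Suc i)) \<ge> length (pconc ws n) + length (ws i)" by simp
  then show ?case using n i by (intro exI[of _ "Suc i"]) (cases "ws i"; auto)
qed

lemma ic_inf_def:
  assumes "\<forall>n. \<exists>i\<ge>n. ws i \<noteq> []"
  shows "inf_concat ws = InfW (\<lambda>k. pconc ws (LEAST n. k < length (pconc ws n)) ! k)"
proof -
  have "\<not> (\<exists>n. \<forall>i\<ge>n. ws i = [])" using assms by blast
  then show ?thesis unfolding inf_concat_def by simp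
qed

lemma ic_prefix:
  assumes "\<forall>n. \<exists>i\<ge>n. ws i \<noteq> []"
  shows "\<exists>h. inf_concat ws = InfW h \<and> (\<forall>n. seg h 0 (length (pconc ws n)) = pconc ws n)"
proof -
  define h where "h = (\<lambda>k. pconc ws (LEAST n. k < length (pconc ws n)) ! k)"
  have "seg h 0 (length (pconc ws n)) = pconc ws n" for n
  proof (rule nth_equalityI)
    fix k assume "k < length (seg h 0 (length (pconc ws n)))"
    then have k: "k < length (pconc ws n)" by simp
    let ?m = "LEAST n. k < length (pconc ws n)"
    have m: "?m \<le> n" "k < length (pconc ws ?m)" using k by (auto intro: Least_le LeastI)
    have "pconc ws n = pconc ws ?m @ concat (map ws [?m..<n])" using pconc_le m(1) by blast
    then have "pconc ws n ! k = pconc ws ?m ! k" using m(2) by (simp add: nth_append)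
    then show "seg h 0 (length (pconc ws n)) ! k = pconc ws n ! k" using k by (simp add: seg_def h_def)
  qed simp
  then show ?thesis using ic_inf_def[OF assms] h_def by blast
qed

lemma ic_char:
  assumes "\<forall>n. \<exists>i\<ge>n. ws i \<noteq> []"
  shows "inf_concat ws = InfW g \<longleftrightarrow> (\<forall>n. seg g 0 (length (pconc ws n)) = pconc ws n)"
proof -
  obtain h where h: "inf_concat ws = InfW h" "\<forall>n. seg h 0 (length (pconc ws n)) = pconc ws n"
    using ic_prefix[OF assms] by blast
  show ?thesis
  proof
    assume "\<forall>n. seg g 0 (length (pconc ws n)) = pconc ws n"
    then have "g = h" using h(2) len_unbounded[OF assms]
      by (intro seg_eq_fun[of g "\<lambda>n. length (pconc ws n)" h]) auto
    then show "inf_concat ws = InfW g" using h by simp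
  qed (use h in simp)
qed

lemma ic_nil: "inf_concat (\<lambda>_. []) = FinW []"
  unfolding inf_concat_def by (simp add: pconc_def)

lemma omega_Nil: "omega_pow {[]} = {FinW []}"
proof -
  have "ws = (\<lambda>_. [])" if "\<forall>i. ws i \<in> {[]}" for ws :: "nat \<Rightarrow> 'a list" using that by auto
  then show ?thesis unfolding omega_pow_def using ic_nil by (auto intro!: exI[of _ "\<lambda>_. []"])
qed

lemma L_Nil: "lconc C (omega_pow {[]}) = FinW ` C"
  unfolding lconc_def omega_Nil by auto

lemma omega_inf: "\<forall>x\<in>D. x \<noteq> [] \<Longrightarrow> v \<in> omega_pow D \<Longrightarrow> \<exists>h. v = InfW h"
  unfolding omega_pow_def using ic_prefix by fastforce

lemma L_fin: "\<forall>x\<in>D. x \<noteq> [] \<Longrightarrow> FinW w \<notin> lconc C (omega_pow D)"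
  unfolding lconc_def using omega_inf by (fastforce simp: sh_def)

lemma Lchar:
  assumes D: "\<forall>x\<in>D. x \<noteq> []"
  shows "InfW g \<in> lconc C (omega_pow D) \<longleftrightarrow>
     (\<exists>b. seg g 0 (b 0) \<in> C \<and> (\<forall>i. seg g (b i) (b (Suc i)) \<in> D))"
proof
  assume "InfW g \<in> lconc C (omega_pow D)"
  then obtain x ys where x: "x \<in> C" and ys: "\<forall>i. ys i \<in> D" and e: "InfW g = wcat (FinW x) (inf_concat ys)"
    unfolding lconc_def omega_pow_def by blast
  have ne: "\<forall>n. \<exists>i\<ge>n. ys i \<noteq> []" using ys D by blast
  obtain h where h: "inf_concat ys = InfW h" "\<forall>n. seg h 0 (length (pconc ys n)) = pconc ys n"
    using ic_prefix[OF ne] by blast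
  have g: "g = sh x h" using e h by (simp add: sh_def)
  define b where "b i = length x + length (pconc ys i)" for i
  have "seg g 0 (b 0) = x" using seg_sh0[of x h 0] by (simp add: g b_def seg_def)
  moreover have "seg g (b i) (b (Suc i)) = ys i" for i
  proof -
    have "seg g (b i) (b (Suc i)) = seg h (length (pconc ys i)) (length (pconc ys (Suc i)))"
      by (simp add: g b_def seg_sh)
    moreover have "seg h 0 (length (pconc ys (Suc i))) = seg h 0 (length (pconc ys i)) @ seg h (length (pconc ys i)) (length (pconc ys (Suc i)))"
      by (simp add: seg_append pconc_Suc)
    ultimately show ?thesis using h(2)[rule_format, of "Suc i"] h(2)[rule_format, of i] by (simp add: pconc_Suc)
  qed
  ultimately show "\<exists>b. seg g 0 (b 0) \<in> C \<and> (\<forall>i. seg g (b i) (b (Suc i)) \<in> D)"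
    using x ys by (intro exI[of _ b]) auto
next
  assume "\<exists>b. seg g 0 (b 0) \<in> C \<and> (\<forall>i. seg g (b i) (b (Suc i)) \<in> D)"
  then obtain b where b0: "seg g 0 (b 0) \<in> C" and bi: "\<And>i. seg g (b i) (b (Suc i)) \<in> D" by blast
  define x where "x = seg g 0 (b 0)"
  define ys where "ys i = seg g (b i) (b (Suc i))" for i
  have lt: "b i < b (Suc i)" for i
  proof (rule ccontr)
    assume "\<not> b i < b (Suc i)"
    then have "seg g (b i) (b (Suc i)) = []" by (simp add: seg_def)
    with bi[of i] D show False by blast
  qed
  then have mono: "strict_mono b" by (simp add: strict_mono_Suc_iff)
  have pc: "pconc ys n = seg g (b 0) (b n)" for n
  proof (induction n)
    case 0 then show ?case by (simp add: seg_def)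
  next
    case (Suc n)
    have "b 0 \<le> b n" using mono by (simp add: strict_mono_less_eq)
    then show ?case using Suc lt[of n] by (simp add: pconc_Suc ys_def seg_append)
  qed
  have ysD: "ys i \<in> D" for i using bi by (simp add: ys_def)
  have ne: "\<forall>n. \<exists>i\<ge>n. ys i \<noteq> []" using ysD D by blast
  obtain h where h: "inf_concat ys = InfW h" "\<forall>n. seg h 0 (length (pconc ys n)) = pconc ys n"
    using ic_prefix[OF ne] by blast
  have lb: "length x + length (pconc ys n) = b n" for n
    using pc[of n] mono by (simp add: x_def strict_mono_less_eq)
  have "g = sh x h"
  proof (rule seg_eq_fun[of g b])
    fix n
    have "seg (sh x h) 0 (b n) = x @ seg h 0 (length (pconc ys n))"
      using seg_sh0[of x h "length (pconc ys n)"] lb[of n] by simp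
    also have "\<dots> = seg g 0 (b 0) @ seg g (b 0) (b n)" using h(2) pc x_def by simp
    also have "\<dots> = seg g 0 (b n)" using mono by (simp add: seg_append strict_mono_less_eq)
    finally show "seg g 0 (b n) = seg (sh x h) 0 (b n)" by simp
  next
    fix k have "k \<le> b k" by (rule strict_mono_imp_increasing[OF mono])
    then show "\<exists>n. k < b n" using lt[of k] by (intro exI[of _ "Suc k"]) simp
  qed
  then have "InfW g = wcat (FinW x) (inf_concat ys)" using h by (simp add: sh_def)
  moreover have "inf_concat ys \<in> omega_pow D" unfolding omega_pow_def using ysD by blast
  moreover have "x \<in> C" using b0 x_def by simp
  ultimately show "InfW g \<in> lconc C (omega_pow D)" unfolding lconc_def by blast
qed


context fixes d :: "'s \<Rightarrow> 'a \<Rightarrow> 's set" and Fs :: "'s set"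
begin

abbreviation LL :: "'a list set \<Rightarrow> 'a list set \<Rightarrow> 'a fiword set" where
  "LL C D \<equiv> lconc C (omega_pow D)"

definition ov :: "'a list set \<times> 'a list set \<Rightarrow> 'a list set \<times> 'a list set \<Rightarrow> bool" where
  "ov p q \<longleftrightarrow> LL (fst p) (snd p) \<inter> LL (fst q) (snd q) \<noteq> {}"

lemma Cpairs_iff: "(C, D) \<in> Cpairs d Fs \<longleftrightarrow> C \<in> Qc d Fs \<and> D \<in> Qc d Fs \<and> cmul d Fs C D = C \<and> cmul d Fs D D = D"
  by (simp add: Cpairs_def)

lemma L_ne: assumes "(C, D) \<in> Cpairs d Fs" shows "LL C D \<noteq> {}"
proof -
  have "C \<in> Qc d Fs" "D \<in> Qc d Fs" using assms by (simp_all add: Cpairs_def)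
  then obtain x y where "x \<in> C" "y \<in> D" using Qc_ne by metis
  then have "inf_concat (\<lambda>_. y) \<in> omega_pow D" unfolding omega_pow_def by auto
  then have "wcat (FinW x) (inf_concat (\<lambda>_. y)) \<in> LL C D"
    unfolding lconc_def using \<open>x \<in> C\<close> by blast
  then show ?thesis by blast
qed

lemma ff_sub: "ff d Fs V \<subseteq> Cpairs d Fs" unfolding ff_def by auto

lemma ffgg_iff: "q \<in> ff d Fs (gg X) \<longleftrightarrow> q \<in> Cpairs d Fs \<and> (\<exists>p\<in>X. ov p q)"
  unfolding ff_def gg_def ov_def by (cases q) force

lemma cc_iff: "q \<in> cc d Fs X \<longleftrightarrow> (\<exists>n\<ge>1. q \<in> ((ff d Fs \<circ> gg) ^^ n) X)"
  unfolding cc_def by auto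

lemma cc_step: assumes "p \<in> cc d Fs X" "q \<in> Cpairs d Fs" "ov p q" shows "q \<in> cc d Fs X"
proof -
  obtain n where n: "n \<ge> 1" "p \<in> ((ff d Fs \<circ> gg) ^^ n) X" using assms(1) cc_iff by blast
  then have "q \<in> ((ff d Fs \<circ> gg) ^^ Suc n) X" using assms(2,3) by (simp add: ffgg_iff) blast
  then show ?thesis unfolding cc_iff by (intro exI[of _ "Suc n"]) simp
qed

lemma ov_refl: "p \<in> Cpairs d Fs \<Longrightarrow> ov p p"
  unfolding ov_def using L_ne by (cases p) auto

lemma ov_sym: "ov p q \<Longrightarrow> ov q p" unfolding ov_def by blast

lemma cc_incl: assumes "X \<subseteq> Cpairs d Fs" shows "X \<subseteq> cc d Fs X"
proof
  fix p assume p: "p \<in> X"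
  then have "p \<in> ((ff d Fs \<circ> gg) ^^ 1) X" using assms ov_refl by (simp add: ffgg_iff) blast
  then show "p \<in> cc d Fs X" using cc_iff by blast
qed

lemma cc_closed:
  assumes "X \<subseteq> S" "\<And>p q. p \<in> S \<Longrightarrow> q \<in> Cpairs d Fs \<Longrightarrow> ov p q \<Longrightarrow> q \<in> S"
  shows "cc d Fs X \<subseteq> S"
proof -
  have "((ff d Fs \<circ> gg) ^^ n) X \<subseteq> S" for n
  proof (induction n)
    case 0 then show ?case using assms(1) by simp
  next
    case (Suc n)
    show ?case
    proof
      fix q assume "q \<in> ((ff d Fs \<circ> gg) ^^ Suc n) X"
      then have "q \<in> ff d Fs (gg (((ff d Fs \<circ> gg) ^^ n) X))" by simp
      then obtain p where "q \<in> Cpairs d Fs" "p \<in> ((ff d Fs \<circ> gg) ^^ n) X" "ov p q"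
        unfolding ffgg_iff by blast
      then show "q \<in> S" using Suc.IH assms(2) by blast
    qed
  qed
  then show ?thesis unfolding cc_def by blast
qed

lemma ff_Un: "ff d Fs (V \<union> V') = ff d Fs V \<union> ff d Fs V'"
  unfolding ff_def by auto

lemma gg_Un: "gg (X \<union> Y) = gg X \<union> gg Y" unfolding gg_def by auto

lemma pow_Un: "((ff d Fs \<circ> gg) ^^ n) (X \<union> Y) = ((ff d Fs \<circ> gg) ^^ n) X \<union> ((ff d Fs \<circ> gg) ^^ n) Y"
  by (induction n) (simp_all add: ff_Un gg_Un)

lemma cc_Un: "cc d Fs (X \<union> Y) = cc d Fs X \<union> cc d Fs Y"
  unfolding cc_def pow_Un by auto

lemma ff_mono: "V \<subseteq> V' \<Longrightarrow> ff d Fs V \<subseteq> ff d Fs V'"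
  unfolding ff_def by auto

lemma cc_mono: "X \<subseteq> Y \<Longrightarrow> cc d Fs X \<subseteq> cc d Fs Y"
proof -
  assume "X \<subseteq> Y"
  then have "Y = X \<union> Y" by auto
  then have "cc d Fs Y = cc d Fs X \<union> cc d Fs Y" using cc_Un[of X Y] by simp
  then show ?thesis by blast
qed

lemma cc_ff_sub: "cc d Fs X \<subseteq> Cpairs d Fs"
proof -
  have "((ff d Fs \<circ> gg) ^^ Suc n) X \<subseteq> Cpairs d Fs" for n using ff_sub by simp
  moreover have "n \<ge> 1 \<Longrightarrow> ((ff d Fs \<circ> gg) ^^ n) X \<subseteq> Cpairs d Fs" for n
    using calculation[of "n - 1"] by (cases n) auto
  ultimately show ?thesis unfolding cc_def by auto
qed

lemma part1a: "alpha_star d Fs UNIV = Qc d Fs"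
  unfolding alpha_star_def using Qc_ne by auto

lemma ff_UNIV: "ff d Fs UNIV = Cpairs d Fs"
  unfolding ff_def using L_ne by auto

lemma part1b: "alpha_om d Fs UNIV = Cpairs d Fs"
proof
  show "alpha_om d Fs UNIV \<subseteq> Cpairs d Fs" unfolding alpha_om_def by (rule cc_ff_sub)
  show "Cpairs d Fs \<subseteq> alpha_om d Fs UNIV" unfolding alpha_om_def ff_UNIV by (rule cc_incl) simp
qed

lemma part1c: "alpha_star d Fs {} = {}" unfolding alpha_star_def by auto

lemma part1d: "alpha_om d Fs {} = {}"
proof -
  have "ff d Fs {} = {}" unfolding ff_def by auto
  moreover have "cc d Fs {} \<subseteq> {}" by (rule cc_closed) (auto simp: ov_def)
  ultimately show ?thesis unfolding alpha_om_def by simp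
qed

lemma part2a: "alpha_star d Fs (U \<union> U') = alpha_star d Fs U \<union> alpha_star d Fs U'"
  unfolding alpha_star_def by auto

lemma part2b: "alpha_om d Fs (V \<union> V') = alpha_om d Fs V \<union> alpha_om d Fs V'"
  unfolding alpha_om_def ff_Un cc_Un ..

lemma part3a: "alpha_star d Fs (lmul U U') = amul d Fs (alpha_star d Fs U) (alpha_star d Fs U')"
proof
  show "alpha_star d Fs (lmul U U') \<subseteq> amul d Fs (alpha_star d Fs U) (alpha_star d Fs U')"
  proof
    fix C assume "C \<in> alpha_star d Fs (lmul U U')"
    then obtain u v where C: "C \<in> Qc d Fs" "u @ v \<in> C" "u \<in> U" "v \<in> U'"
      unfolding alpha_star_def lmul_def by blast
    then obtain w where "C = cls d Fs w" by (auto elim: Qc_E)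
    then have "C = cls d Fs (u @ v)" using mem_cls_eq[of "u @ v" d Fs w] C(2) by simp
    then have "C = cmul d Fs (cls d Fs u) (cls d Fs v)" by (simp add: cmul_cls)
    moreover have "cls d Fs u \<in> alpha_star d Fs U" "cls d Fs v \<in> alpha_star d Fs U'"
      unfolding alpha_star_def using C self_cls by auto
    ultimately show "C \<in> amul d Fs (alpha_star d Fs U) (alpha_star d Fs U')"
      unfolding amul_def by blast
  qed
next
  show "amul d Fs (alpha_star d Fs U) (alpha_star d Fs U') \<subseteq> alpha_star d Fs (lmul U U')"
  proof
    fix E assume "E \<in> amul d Fs (alpha_star d Fs U) (alpha_star d Fs U')"
    then obtain C C' u v where E: "E = cmul d Fs C C'" "C \<in> Qc d Fs" "C' \<in> Qc d Fs"
      "u \<in> C" "u \<in> U" "v \<in> C'" "v \<in> U'"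
      unfolding amul_def alpha_star_def by blast
    then have "u @ v \<in> E" using mem_cmul by blast
    moreover have "u @ v \<in> lmul U U'" using E unfolding lmul_def by blast
    ultimately show "E \<in> alpha_star d Fs (lmul U U')"
      unfolding alpha_star_def using E cmul_Qc by blast
  qed
qed

end

lemma seg_shift': "m \<le> i \<Longrightarrow> m \<le> j \<Longrightarrow> seg (\<lambda>k. g (k + m)) (i - m) (j - m) = seg g i j"
  using seg_shift[of g m "i - m" "j - m"] by simp

lemma sh_shift: "(\<lambda>k. sh x h (k + length x)) = h"
  by (auto simp: sh_def fun_eq_iff)

lemma seg_sh0': "seg (sh x h) 0 (length x) = x"
  using seg_sh0[of x h 0] by (simp add: seg_def)

context fixes d :: "'s \<Rightarrow> 'a \<Rightarrow> 's set" and Fs :: "'s set"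
begin

lemma Qc_mem: "X \<in> Qc d Fs \<Longrightarrow> x \<in> X \<Longrightarrow> X = cls d Fs x"
  by (auto elim!: Qc_E simp: mem_cls_eq)

lemma Cpairs_mul: "A \<in> Qc d Fs \<Longrightarrow> (C, D) \<in> Cpairs d Fs \<Longrightarrow> (cmul d Fs A C, D) \<in> Cpairs d Fs"
  unfolding Cpairs_def by (auto simp: cmul_Qc cmul_assoc)

lemma Cpairs_Nil: "C \<in> Qc d Fs \<Longrightarrow> (C, {[]}) \<in> Cpairs d Fs"
  unfolding Cpairs_def using cls_Qc[of d Fs "[]"] by (simp add: cls_Nil cmul_Nil)

lemma inf_only: "D \<in> Qc d Fs \<Longrightarrow> D \<noteq> {[]} \<Longrightarrow> w \<in> LL C D \<Longrightarrow> \<exists>g. w = InfW g"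
  using L_fin[of D _ C] Qc_nonNil by (cases w) blast+

lemma Lchar2:
  assumes CD: "(C, D) \<in> Cpairs d Fs" and DN: "D \<noteq> {[]}" and w: "InfW g \<in> LL C D"
  shows "\<exists>b. strict_mono b \<and> (\<forall>j. seg g 0 (b j) \<in> C) \<and> (\<forall>i. seg g (b i) (b (Suc i)) \<in> D)"
proof -
  have Q: "C \<in> Qc d Fs" "D \<in> Qc d Fs" "cmul d Fs C D = C" using CD by (auto simp: Cpairs_def)
  have Dn: "\<forall>x\<in>D. x \<noteq> []" using Q DN Qc_nonNil by blast
  obtain b where b0: "seg g 0 (b 0) \<in> C" and bi: "\<And>i. seg g (b i) (b (Suc i)) \<in> D"
    using w Lchar[OF Dn] by blast
  have lt: "b i < b (Suc i)" for i
  proof (rule ccontr)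
    assume "\<not> b i < b (Suc i)"
    then have "seg g (b i) (b (Suc i)) = []" by (simp add: seg_def)
    with bi[of i] Dn show False by blast
  qed
  then have mono: "strict_mono b" by (simp add: strict_mono_Suc_iff)
  have "seg g 0 (b j) \<in> C" for j
  proof (induction j)
    case 0 show ?case using b0 .
  next
    case (Suc j)
    have "seg g 0 (b (Suc j)) = seg g 0 (b j) @ seg g (b j) (b (Suc j))"
      using lt[of j] by (simp add: seg_append)
    also have "\<dots> \<in> cmul d Fs C D" using Suc bi[of j] Q by (intro mem_cmul) auto
    finally show ?case using Q by simp
  qed
  then show ?thesis using mono bi by blast
qed

lemma split_left:
  assumes CD: "(C, D) \<in> Cpairs d Fs" and w: "wcat (FinW u) v \<in> LL C D"
  shows "\<exists>C'. C = cmul d Fs (cls d Fs u) C' \<and> (C', D) \<in> Cpairs d Fs \<and> v \<in> LL C' D"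
proof -
  have Q: "C \<in> Qc d Fs" "D \<in> Qc d Fs" "cmul d Fs C D = C" "cmul d Fs D D = D" using CD by (auto simp: Cpairs_def)
  show ?thesis
  proof (cases "D = {[]}")
    case True
    then obtain y where y: "wcat (FinW u) v = FinW y" "y \<in> C" using w L_Nil by blast
    then obtain z where z: "v = FinW z" "y = u @ z" by (cases v) auto
    have "C = cls d Fs (u @ z)" using Q y z Qc_mem by blast
    then have "C = cmul d Fs (cls d Fs u) (cls d Fs z)" by (simp add: cmul_cls)
    moreover have "(cls d Fs z, D) \<in> Cpairs d Fs" using True Cpairs_Nil by simp
    moreover have "v \<in> LL (cls d Fs z) D" using True z L_Nil self_cls by blast
    ultimately show ?thesis by blast
  next
    case False
    obtain g where g: "wcat (FinW u) v = InfW g" using inf_only[OF Q(2) False w] by blast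
    then obtain g' where g': "v = InfW g'" "g = sh u g'" by (cases v) (auto simp: sh_def)
    obtain b where mono: "strict_mono b" and bC: "\<And>j. seg g 0 (b j) \<in> C"
      and bD: "\<And>i. seg g (b i) (b (Suc i)) \<in> D"
      using Lchar2[OF CD False] w g by metis
    let ?j = "length u"
    have bj: "length u \<le> b ?j" using strict_mono_imp_increasing[OF mono] by blast
    define s where "s = seg g (length u) (b ?j)"
    have u: "seg g 0 (length u) = u" using g' seg_sh0' by simp
    have us: "seg g 0 (b ?j) = u @ s" using seg_append[of 0 "length u" "b ?j" g] u bj unfolding s_def by simp
    have Cuj: "C = cls d Fs (u @ s)" using Qc_mem[OF Q(1) bC[of ?j]] us by simp
    define C' where "C' = cmul d Fs (cls d Fs s) D"
    have "cmul d Fs (cls d Fs u) C' = cmul d Fs (cmul d Fs (cls d Fs u) (cls d Fs s)) D"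
      unfolding C'_def using Q by (simp add: cmul_assoc)
    also have "\<dots> = C" using Cuj Q by (simp add: cmul_cls)
    finally have e1: "C = cmul d Fs (cls d Fs u) C'" by simp
    have e2: "(C', D) \<in> Cpairs d Fs" unfolding C'_def Cpairs_def using Q
      by (simp add: cmul_Qc cmul_assoc)
    have Dn: "\<forall>x\<in>D. x \<noteq> []" using Q False Qc_nonNil by blast
    have gg': "g' = (\<lambda>k. g (k + length u))" using g' sh_shift by metis
    have bm: "b i \<le> b k" if "i \<le> k" for i k using mono that by (simp add: strict_mono_less_eq)
    define b' where "b' i = b (i + Suc ?j) - length u" for i
    have "seg g' 0 (b' 0) = seg g (length u) (b (Suc ?j))"
      unfolding gg' b'_def using seg_shift'[of "length u" "length u" "b (Suc ?j)" g] bm[of ?j "Suc ?j"] bj by simp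
    also have "\<dots> = s @ seg g (b ?j) (b (Suc ?j))" unfolding s_def using bj bm[of ?j "Suc ?j"]
      by (simp add: seg_append)
    also have "\<dots> \<in> C'" unfolding C'_def using Q bD[of ?j] self_cls by (intro mem_cmul) auto
    finally have s0: "seg g' 0 (b' 0) \<in> C'" .
    have "seg g' (b' i) (b' (Suc i)) \<in> D" for i
    proof -
      have "b ?j \<le> b (i + Suc ?j)" "b ?j \<le> b (Suc i + Suc ?j)" using bm by simp_all
      then have "length u \<le> b (i + Suc ?j)" "length u \<le> b (Suc i + Suc ?j)" using bj by linarith+
      then have "seg g' (b' i) (b' (Suc i)) = seg g (b (i + Suc ?j)) (b (Suc (i + Suc ?j)))"
        unfolding gg' b'_def using seg_shift' by simp
      then show ?thesis using bD by simp
    qed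
    then have "v \<in> LL C' D" using g' s0 Lchar[OF Dn] by blast
    then show ?thesis using e1 e2 by blast
  qed
qed


lemma split_ov:
  assumes A: "A \<in> Qc d Fs" and p: "(C', D') \<in> Cpairs d Fs" and q: "(C'', D'') \<in> Cpairs d Fs"
    and o: "ov (cmul d Fs A C', D') (C'', D'')"
  shows "\<exists>C3. C'' = cmul d Fs A C3 \<and> (C3, D'') \<in> Cpairs d Fs \<and> ov (C', D') (C3, D'')"
proof -
  have Q: "C' \<in> Qc d Fs" "D' \<in> Qc d Fs" "cmul d Fs C' D' = C'" "cmul d Fs D' D' = D'" using p by (auto simp: Cpairs_def)
  have Q2: "C'' \<in> Qc d Fs" "D'' \<in> Qc d Fs" "cmul d Fs C'' D'' = C''" "cmul d Fs D'' D'' = D''" using q by (auto simp: Cpairs_def)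
  have pA: "(cmul d Fs A C', D') \<in> Cpairs d Fs" using Cpairs_mul[OF A p] .
  obtain w where w1: "w \<in> LL (cmul d Fs A C') D'" and w2: "w \<in> LL C'' D''" using o unfolding ov_def by auto
  show ?thesis
  proof (cases "D' = {[]}")
    case True
    then obtain y where y: "w = FinW y" "y \<in> cmul d Fs A C'" using w1 L_Nil by blast
    have D2: "D'' = {[]}"
    proof (rule ccontr)
      assume "D'' \<noteq> {[]}" then show False using inf_only[OF Q2(2) _ w2] y by auto
    qed
    then have "y \<in> C''" using w2 y L_Nil by auto
    then have "C'' = cmul d Fs A C'" using Qc_mem[OF Q2(1)] Qc_mem[OF cmul_Qc[OF A Q(1)]] y by metis
    moreover have "ov (C', D') (C', D'')" using ov_refl p True D2 by simp
    ultimately show ?thesis using p True D2 by blast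
  next
    case False
    obtain g where g: "w = InfW g" using inf_only[OF Q(2) False w1] by blast
    have D2: "D'' \<noteq> {[]}" using w2 g L_Nil by auto
    obtain b where mono: "strict_mono b" and bC: "\<And>j. seg g 0 (b j) \<in> cmul d Fs A C'"
      and bD: "\<And>i. seg g (b i) (b (Suc i)) \<in> D'"
      using Lchar2[OF pA False] w1 g by metis
    obtain b2 where mono2: "strict_mono b2" and b2C: "\<And>j. seg g 0 (b2 j) \<in> C''"
      and b2D: "\<And>i. seg g (b2 i) (b2 (Suc i)) \<in> D''"
      using Lchar2[OF q D2] w2 g by metis
    have bm: "b i \<le> b k" if "i \<le> k" for i k using mono that by (simp add: strict_mono_less_eq)
    have bm2: "b2 i \<le> b2 k" if "i \<le> k" for i k using mono2 that by (simp add: strict_mono_less_eq)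
    define j where "j = b 0"
    have bj: "b 0 \<le> b2 j" using strict_mono_imp_increasing[OF mono2] j_def by blast
    define s where "s = seg g (b 0) (b2 j)"
    have e0: "seg g 0 (b2 j) = seg g 0 (b 0) @ s" using seg_append[of 0 "b 0" "b2 j" g] bj unfolding s_def by simp
    have AC: "cmul d Fs A C' = cls d Fs (seg g 0 (b 0))" using Qc_mem[OF cmul_Qc[OF A Q(1)] bC[of 0]] .
    have C2: "C'' = cls d Fs (seg g 0 (b2 j))" using Qc_mem[OF Q2(1) b2C[of j]] .
    define C3 where "C3 = cmul d Fs (cmul d Fs C' (cls d Fs s)) D''"
    have "cmul d Fs A C3 = cmul d Fs (cmul d Fs (cmul d Fs A C') (cls d Fs s)) D''"
      unfolding C3_def using A Q Q2 by (simp add: cmul_assoc cmul_Qc)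
    also have "\<dots> = C''" using AC C2 e0 Q2 by (simp add: cmul_cls)
    finally have e1: "C'' = cmul d Fs A C3" by simp
    have e2: "(C3, D'') \<in> Cpairs d Fs" unfolding C3_def Cpairs_def using Q Q2
      by (simp add: cmul_Qc cmul_assoc)
    obtain c where c: "c \<in> C'" using Qc_ne[OF Q(1)] by blast
    define g' where "g' = (\<lambda>k. g (k + b 0))"
    define g2 where "g2 = sh c g'"
    have Dn: "\<forall>x\<in>D'. x \<noteq> []" using Q False Qc_nonNil by blast
    have Dn2: "\<forall>x\<in>D''. x \<noteq> []" using Q2 D2 Qc_nonNil by blast
    define b' where "b' i = length c + (b i - b 0)" for i
    have "seg g2 0 (b' 0) = c" unfolding g2_def b'_def using seg_sh0' by simp
    then have m0: "seg g2 0 (b' 0) \<in> C'" using c by simp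
    have mi: "seg g2 (b' i) (b' (Suc i)) \<in> D'" for i
    proof -
      have "seg g2 (b' i) (b' (Suc i)) = seg g' (b i - b 0) (b (Suc i) - b 0)"
        unfolding g2_def b'_def by (rule seg_sh)
      also have "\<dots> = seg g (b i) (b (Suc i))" unfolding g'_def
        using bm[of 0 i] bm[of 0 "Suc i"] by (intro seg_shift') simp_all
      finally show ?thesis using bD by simp
    qed
    have L1: "InfW g2 \<in> LL C' D'" using Lchar[OF Dn] m0 mi by blast
    define b3 where "b3 i = length c + (b2 (i + Suc j) - b 0)" for i
    have bj2: "b 0 \<le> b2 (i + Suc j)" for i using bj bm2[of j "i + Suc j"] by simp
    have "seg g2 0 (b3 0) = c @ seg g' 0 (b2 (Suc j) - b 0)" unfolding g2_def b3_def by (simp add: seg_sh0)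
    also have "seg g' 0 (b2 (Suc j) - b 0) = seg g (b 0) (b2 (Suc j))"
      unfolding g'_def using seg_shift'[of "b 0" "b 0" "b2 (Suc j)" g] bj2[of 0] by simp
    also have "\<dots> = s @ seg g (b2 j) (b2 (Suc j))" unfolding s_def using bj bm2[of j "Suc j"]
      by (simp add: seg_append)
    finally have "seg g2 0 (b3 0) = (c @ s) @ seg g (b2 j) (b2 (Suc j))" by simp
    also have "\<dots> \<in> C3" unfolding C3_def using Q Q2 c b2D[of j] self_cls
      by (intro mem_cmul cmul_Qc) auto
    finally have n0: "seg g2 0 (b3 0) \<in> C3" .
    have ni: "seg g2 (b3 i) (b3 (Suc i)) \<in> D''" for i
    proof -
      have "seg g2 (b3 i) (b3 (Suc i)) = seg g' (b2 (i + Suc j) - b 0) (b2 (Suc i + Suc j) - b 0)"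
        unfolding g2_def b3_def by (rule seg_sh)
      also have "\<dots> = seg g (b2 (i + Suc j)) (b2 (Suc i + Suc j))" unfolding g'_def
        using bj2[of i] bj2[of "Suc i"] by (intro seg_shift') simp_all
      finally show ?thesis using b2D[of "i + Suc j"] by simp
    qed
    have L2: "InfW g2 \<in> LL C3 D''" using Lchar[OF Dn2] n0 ni by blast
    have "ov (C', D') (C3, D'')" unfolding ov_def using L1 L2 by auto
    then show ?thesis using e1 e2 by blast
  qed
qed

lemma prefix_mem:
  assumes "a \<in> A" "A \<in> Qc d Fs" "C \<in> Qc d Fs" "w \<in> LL C D"
  shows "wcat (FinW a) w \<in> LL (cmul d Fs A C) D"
proof -
  obtain x y where xy: "x \<in> C" "y \<in> omega_pow D" "w = wcat (FinW x) y" using assms(4) unfolding lconc_def by blast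
  have "a @ x \<in> cmul d Fs A C" using mem_cmul[OF assms(1) xy(1) assms(2,3)] .
  moreover have "wcat (FinW a) w = wcat (FinW (a @ x)) y" using xy(3) by (simp add: wcat_assoc)
  ultimately show ?thesis unfolding lconc_def using xy(2) by blast
qed

lemma ov_prefix:
  assumes "a \<in> A" "A \<in> Qc d Fs" "p \<in> Cpairs d Fs" "q \<in> Cpairs d Fs" "ov p q"
  shows "ov (cmul d Fs A (fst p), snd p) (cmul d Fs A (fst q), snd q)"
proof -
  obtain w where "w \<in> LL (fst p) (snd p)" "w \<in> LL (fst q) (snd q)" using assms(5) unfolding ov_def by auto
  moreover have "fst p \<in> Qc d Fs" "fst q \<in> Qc d Fs" using assms(3,4) by (auto simp: Cpairs_def)
  ultimately show ?thesis unfolding ov_def using prefix_mem[OF assms(1,2)] by fastforce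
qed

lemma part3b: "alpha_om d Fs (lconc U V) = amul_om d Fs (alpha_star d Fs U) (alpha_om d Fs V)"
proof
  let ?S = "amul_om d Fs (alpha_star d Fs U) (alpha_om d Fs V)"
  have e: "alpha_om d Fs (lconc U V) = cc d Fs (ff d Fs (lconc U V))" by (rule alpha_om_def)
  have "cc d Fs (ff d Fs (lconc U V)) \<subseteq> ?S"
  proof (rule cc_closed)
    show "ff d Fs (lconc U V) \<subseteq> ?S"
    proof
      fix p assume "p \<in> ff d Fs (lconc U V)"
      then obtain C D w where p: "p = (C, D)" "(C, D) \<in> Cpairs d Fs" "w \<in> LL C D" "w \<in> lconc U V"
        unfolding ff_def by auto
      then obtain u v where uv: "u \<in> U" "v \<in> V" "w = wcat (FinW u) v" unfolding lconc_def by blast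
      obtain C' where C': "C = cmul d Fs (cls d Fs u) C'" "(C', D) \<in> Cpairs d Fs" "v \<in> LL C' D"
        using split_left[OF p(2)] p(3) uv(3) by blast
      have "cls d Fs u \<in> alpha_star d Fs U" unfolding alpha_star_def using uv self_cls by auto
      moreover have "(C', D) \<in> ff d Fs V" unfolding ff_def using C' uv by auto
      then have "(C', D) \<in> alpha_om d Fs V" unfolding alpha_om_def using cc_incl[OF ff_sub] by blast
      ultimately show "p \<in> ?S" unfolding amul_om_def using p C' by blast
    qed
  next
    fix p q assume p: "p \<in> ?S" and q: "q \<in> Cpairs d Fs" and o: "ov p q"
    then obtain A C' D' where pd: "p = (cmul d Fs A C', D')" "A \<in> alpha_star d Fs U" "(C', D') \<in> alpha_om d Fs V"
      unfolding amul_om_def by blast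
    have A: "A \<in> Qc d Fs" using pd unfolding alpha_star_def by auto
    have pc: "(C', D') \<in> Cpairs d Fs" using pd(3) cc_ff_sub unfolding alpha_om_def by blast
    obtain C'' D'' where qd: "q = (C'', D'')" by (cases q)
    obtain C3 where C3: "C'' = cmul d Fs A C3" "(C3, D'') \<in> Cpairs d Fs" "ov (C', D') (C3, D'')"
      using split_ov[OF A pc q[unfolded qd]] o pd qd by blast
    have "(C3, D'') \<in> alpha_om d Fs V" using cc_step pd(3) C3 unfolding alpha_om_def by blast
    then show "q \<in> ?S" unfolding amul_om_def using qd C3 pd by blast
  qed
  then show "alpha_om d Fs (lconc U V) \<subseteq> ?S" unfolding e .
next
  show "amul_om d Fs (alpha_star d Fs U) (alpha_om d Fs V) \<subseteq> alpha_om d Fs (lconc U V)"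
  proof
    fix r assume "r \<in> amul_om d Fs (alpha_star d Fs U) (alpha_om d Fs V)"
    then obtain A C D where r: "r = (cmul d Fs A C, D)" "A \<in> alpha_star d Fs U" "(C, D) \<in> alpha_om d Fs V"
      unfolding amul_om_def by blast
    obtain a where a: "a \<in> A" "a \<in> U" "A \<in> Qc d Fs" using r(2) unfolding alpha_star_def by auto
    let ?S = "{p. p \<in> Cpairs d Fs \<and> (cmul d Fs A (fst p), snd p) \<in> alpha_om d Fs (lconc U V)}"
    have "cc d Fs (ff d Fs V) \<subseteq> ?S"
    proof (rule cc_closed)
      show "ff d Fs V \<subseteq> ?S"
      proof
        fix p assume "p \<in> ff d Fs V"
        then obtain C D v where p: "p = (C, D)" "(C, D) \<in> Cpairs d Fs" "v \<in> LL C D" "v \<in> V"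
          unfolding ff_def by auto
        have CQ: "C \<in> Qc d Fs" using p by (simp add: Cpairs_def)
        have "wcat (FinW a) v \<in> LL (cmul d Fs A C) D" using prefix_mem[OF a(1,3) CQ p(3)] .
        moreover have "wcat (FinW a) v \<in> lconc U V" unfolding lconc_def using a p by blast
        moreover have "(cmul d Fs A C, D) \<in> Cpairs d Fs" using Cpairs_mul[OF a(3) p(2)] .
        ultimately have "(cmul d Fs A C, D) \<in> ff d Fs (lconc U V)" unfolding ff_def by blast
        then have "(cmul d Fs A C, D) \<in> alpha_om d Fs (lconc U V)"
          unfolding alpha_om_def using cc_incl[OF ff_sub] by blast
        then show "p \<in> ?S" using p by simp
      qed
    next
      fix p q assume p: "p \<in> ?S" and q: "q \<in> Cpairs d Fs" and o: "ov p q"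
      have "ov (cmul d Fs A (fst p), snd p) (cmul d Fs A (fst q), snd q)"
        using ov_prefix[OF a(1,3) _ q o] p by blast
      moreover have "(cmul d Fs A (fst q), snd q) \<in> Cpairs d Fs"
        using Cpairs_mul[OF a(3), of "fst q" "snd q"] q by simp
      ultimately have "(cmul d Fs A (fst q), snd q) \<in> alpha_om d Fs (lconc U V)"
        using cc_step p unfolding alpha_om_def by blast
      then show "q \<in> ?S" using q by blast
    qed
    then show "r \<in> alpha_om d Fs (lconc U V)" using r(1,3) unfolding alpha_om_def by auto
  qed
qed

end

context fixes d :: "'s \<Rightarrow> 'a \<Rightarrow> 's set" and Fs :: "'s set"
begin

lemma galois: "(\<forall>i. X i \<subseteq> Qc d Fs) \<Longrightarrow> (\<lambda>i. alpha_star d Fs (Y i)) \<le> X \<longleftrightarrow> Y \<le> (\<lambda>i. \<Union>(X i))"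
proof -
  assume X: "\<forall>i. X i \<subseteq> Qc d Fs"
  show ?thesis
  proof
    assume a: "(\<lambda>i. alpha_star d Fs (Y i)) \<le> X"
    show "Y \<le> (\<lambda>i. \<Union>(X i))"
    proof (rule le_funI, rule subsetI)
      fix i y assume "y \<in> Y i"
      then have "cls d Fs y \<in> alpha_star d Fs (Y i)" unfolding alpha_star_def using self_cls[of y d Fs] by auto
      moreover have "alpha_star d Fs (Y i) \<subseteq> X i" using a by (simp add: le_fun_def)
      ultimately have "cls d Fs y \<in> X i" by blast
      then show "y \<in> \<Union>(X i)" using self_cls by blast
    qed
  next
    assume a: "Y \<le> (\<lambda>i. \<Union>(X i))"
    show "(\<lambda>i. alpha_star d Fs (Y i)) \<le> X"
    proof (rule le_funI, rule subsetI)
      fix i C assume "C \<in> alpha_star d Fs (Y i)"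
      then obtain y where y: "C \<in> Qc d Fs" "y \<in> C" "y \<in> Y i" unfolding alpha_star_def by auto
      moreover have "Y i \<subseteq> \<Union>(X i)" using a by (simp add: le_fun_def)
      ultimately have "y \<in> \<Union>(X i)" by blast
      then obtain C' where C': "C' \<in> X i" "y \<in> C'" by blast
      have "C = C'" using Qc_mem[OF y(1,2)] Qc_mem[of C' d Fs y] C' X by blast
      then show "C \<in> X i" using C' by simp
    qed
  qed
qed

lemma part4:
  fixes \<Phi> :: "('n \<Rightarrow> 'a list set) \<Rightarrow> ('n \<Rightarrow> 'a list set)"
    and F :: "('n \<Rightarrow> 'a list set set) \<Rightarrow> ('n \<Rightarrow> 'a list set set)"
  assumes mono: "mono \<Phi>"
    and monoF: "mono_on {X. \<forall>i. X i \<in> M_star d Fs} F"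
    and comm: "\<forall>X. (\<lambda>i. alpha_star d Fs (\<Phi> X i)) = F (\<lambda>i. alpha_star d Fs (X i))"
  shows "(\<lambda>i. alpha_star d Fs (lfp \<Phi> i)) = Inf {X. (\<forall>i. X i \<in> M_star d Fs) \<and> F X \<le> X}"
proof (rule antisym)
  let ?a = "\<lambda>i. alpha_star d Fs (lfp \<Phi> i)"
  let ?S = "{X. (\<forall>i. X i \<in> M_star d Fs) \<and> F X \<le> X}"
  have aM: "\<forall>i. alpha_star d Fs (Y i) \<in> M_star d Fs" for Y :: "'n \<Rightarrow> 'a list set"
    unfolding M_star_def alpha_star_def by auto
  have "F ?a = (\<lambda>i. alpha_star d Fs (\<Phi> (lfp \<Phi>) i))" using comm by metis
  also have "\<dots> = ?a" using lfp_unfold[OF mono] by simp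
  finally have "?a \<in> ?S" using aM by simp
  then show "Inf ?S \<le> ?a" by (rule Inf_lower)
  show "?a \<le> Inf ?S"
  proof (rule Inf_greatest)
    fix X assume "X \<in> ?S"
    then have XM: "\<forall>i. X i \<in> M_star d Fs" and FX: "F X \<le> X" by auto
    have XQ: "\<forall>i. X i \<subseteq> Qc d Fs" using XM unfolding M_star_def by auto
    let ?Y = "\<lambda>i. \<Union>(X i)"
    have aY: "(\<lambda>i. alpha_star d Fs (?Y i)) \<le> X" using galois[OF XQ] by simp
    have "(\<lambda>i. alpha_star d Fs (\<Phi> ?Y i)) = F (\<lambda>i. alpha_star d Fs (?Y i))" using comm by metis
    also have "\<dots> \<le> F X" using monoF aY aM XM by (intro mono_onD[OF monoF]) auto
    also have "\<dots> \<le> X" by (rule FX)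
    finally have "\<Phi> ?Y \<le> ?Y" using galois[OF XQ] by blast
    then have "lfp \<Phi> \<le> ?Y" by (rule lfp_lowerbound)
    then have "?a \<le> (\<lambda>i. alpha_star d Fs (?Y i))"
      unfolding alpha_star_def by (auto simp: le_fun_def)
    then show "?a \<le> X" using aY by (rule order_trans)
  qed
qed

end

definition segw :: "(nat \<Rightarrow> 'a list) \<Rightarrow> nat \<Rightarrow> nat \<Rightarrow> 'a list" where
  "segw ws i j = concat (map ws [i..<j])"

lemma segw_Suc: "i \<le> j \<Longrightarrow> segw ws i (Suc j) = segw ws i j @ ws j"
  by (simp add: segw_def)

lemma segw_app: "i \<le> j \<Longrightarrow> j \<le> k \<Longrightarrow> segw ws i k = segw ws i j @ segw ws j k"
proof -
  assume "i \<le> j" "j \<le> k"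
  then have "[i..<k] = [i..<j] @ [j..<k]" using upt_add_eq_append[of i j "k - j"] by simp
  then show ?thesis unfolding segw_def by simp
qed

lemma pconc_segw: "pconc ws n = segw ws 0 n" by (simp add: pconc_def segw_def)

lemma segw_cls:
  assumes "\<forall>i. cls d Fs (ws i) = cls d Fs (us i)"
  shows "cls d Fs (segw ws i j) = cls d Fs (segw us i j)"
proof (induction j)
  case 0 then show ?case by (simp add: segw_def)
next
  case (Suc j)
  show ?case
  proof (cases "i \<le> j")
    case True
    have "cls d Fs (segw ws i (Suc j)) = cmul d Fs (cls d Fs (segw ws i j)) (cls d Fs (ws j))"
      using True by (simp add: segw_Suc cmul_cls)
    also have "\<dots> = cmul d Fs (cls d Fs (segw us i j)) (cls d Fs (us j))" using Suc assms by simp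
    also have "\<dots> = cls d Fs (segw us i (Suc j))" using True by (simp add: segw_Suc cmul_cls)
    finally show ?thesis .
  next
    case False then show ?thesis by (simp add: segw_def)
  qed
qed

lemma cls_Nil_iff: "cls d Fs x = cls d Fs y \<Longrightarrow> x = [] \<longleftrightarrow> y = []"
  by (metis cls_eq key_Nil)

lemma mem_of_cls: "cls d Fs x = cls d Fs y \<Longrightarrow> x \<in> cls d Fs y"
  using self_cls[of x d Fs] by simp

lemma in_LL_group:
  assumes ne: "\<forall>n. \<exists>i\<ge>n. ws i \<noteq> []" and mono: "strict_mono e"
    and C: "pconc ws (e 1) \<in> C" and D: "\<And>i. segw ws (e (Suc i)) (e (Suc (Suc i))) \<in> D"
    and Dn: "\<forall>x\<in>D. x \<noteq> []"
  shows "inf_concat ws \<in> lconc C (omega_pow D)"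
proof -
  obtain g where g: "inf_concat ws = InfW g" "\<And>n. seg g 0 (length (pconc ws n)) = pconc ws n"
    using ic_prefix[OF ne] by blast
  define \<beta> where "\<beta> i = length (pconc ws (e (Suc i)))" for i
  have "seg g 0 (\<beta> 0) = pconc ws (e 1)" using g(2) by (simp add: \<beta>_def)
  then have b0: "seg g 0 (\<beta> 0) \<in> C" using C by simp
  have bi: "seg g (\<beta> i) (\<beta> (Suc i)) \<in> D" for i
  proof -
    let ?m = "e (Suc i)" and ?n = "e (Suc (Suc i))"
    have mn: "?m \<le> ?n" using mono by (simp add: strict_mono_less_eq)
    have pn: "pconc ws ?n = pconc ws ?m @ segw ws ?m ?n"
      using segw_app[of 0 ?m ?n ws] mn by (simp add: pconc_segw)
    have le: "\<beta> i \<le> \<beta> (Suc i)" using pn by (simp add: \<beta>_def)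
    have A: "seg g 0 (\<beta> (Suc i)) = pconc ws ?m @ segw ws ?m ?n" using g(2)[of ?n] pn by (simp add: \<beta>_def)
    have "seg g 0 (\<beta> (Suc i)) = seg g 0 (\<beta> i) @ seg g (\<beta> i) (\<beta> (Suc i))"
      using seg_append[of 0 "\<beta> i" "\<beta> (Suc i)" g] le by simp
    also have "seg g 0 (\<beta> i) = pconc ws ?m" using g(2)[of ?m] by (simp add: \<beta>_def)
    finally have "pconc ws ?m @ segw ws ?m ?n = pconc ws ?m @ seg g (\<beta> i) (\<beta> (Suc i))"
      using A by simp
    then show ?thesis using D[of i] by simp
  qed
  have "InfW g \<in> lconc C (omega_pow D)" using Lchar[OF Dn] b0 bi by blast
  then show ?thesis using g by simp
qed

lemma ramsey_pair:
  fixes d :: "'s::finite \<Rightarrow> 'a \<Rightarrow> 's set"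
  assumes eq: "\<forall>i. cls d Fs (ws i) = cls d Fs (us i)"
  shows "\<exists>C D. (C, D) \<in> Cpairs d Fs \<and> inf_concat ws \<in> lconc C (omega_pow D)
           \<and> inf_concat us \<in> lconc C (omega_pow D)"
proof -
  have emp: "ws i = [] \<longleftrightarrow> us i = []" for i using eq cls_Nil_iff by blast
  show ?thesis
  proof (cases "\<exists>n. \<forall>i\<ge>n. ws i = []")
    case True
    have P: "(\<lambda>n. \<forall>i\<ge>n. ws i = []) = (\<lambda>n. \<forall>i\<ge>n. us i = [])" using emp by simp
    have True': "\<exists>n. \<forall>i\<ge>n. us i = []" using True emp by simp
    define N where "N = (LEAST n. \<forall>i\<ge>n. ws i = [])"
    have w: "inf_concat ws = FinW (pconc ws N)" unfolding inf_concat_def N_def using True by simp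
    have u: "inf_concat us = FinW (pconc us N)" unfolding inf_concat_def N_def using True' P by simp
    define C where "C = cls d Fs (pconc ws N)"
    have "cls d Fs (pconc ws N) = cls d Fs (pconc us N)" unfolding pconc_segw using segw_cls[OF eq] .
    then have "pconc us N \<in> C" unfolding C_def using mem_of_cls by metis
    moreover have "pconc ws N \<in> C" unfolding C_def by (rule self_cls)
    moreover have "(C, {[]}) \<in> Cpairs d Fs" unfolding C_def by (rule Cpairs_Nil) simp
    ultimately show ?thesis using w u L_Nil by blast
  next
    case False
    then have ne: "\<forall>n. \<exists>i\<ge>n. ws i \<noteq> []" by blast
    then have neu: "\<forall>n. \<exists>i\<ge>n. us i \<noteq> []" using emp by blast
    obtain hh where hh: "bij_betw hh (Qc d Fs) {0..<card (Qc d Fs)}"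
      using ex_bij_betw_finite_nat[OF finite_Qc] by blast
    define f where "f X = hh (cls d Fs (segw ws (Min X) (Max X)))" for X
    have part: "\<forall>x\<in>UNIV. \<forall>y\<in>UNIV. x \<noteq> y \<longrightarrow> f {x, y} < card (Qc d Fs)"
    proof (intro ballI impI)
      fix x y :: nat
      have "hh (cls d Fs (segw ws (Min {x, y}) (Max {x, y}))) \<in> {0..<card (Qc d Fs)}"
        using hh cls_Qc unfolding bij_betw_def by blast
      then show "f {x, y} < card (Qc d Fs)" unfolding f_def by simp
    qed
    obtain Y t where Y: "infinite Y" "\<forall>x\<in>Y. \<forall>y\<in>Y. x \<noteq> y \<longrightarrow> f {x, y} = t"
      using Ramsey2[OF infinite_UNIV_nat part] by blast
    define e where "e = enumerate Y"
    have mono: "strict_mono e" unfolding e_def using enumerate_mono[OF _ Y(1)] by (simp add: strict_mono_def)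
    have eY: "e n \<in> Y" for n unfolding e_def by (rule enumerate_in_set[OF Y(1)])
    have ft: "hh (cls d Fs (segw ws (e i) (e j))) = t" if "i < j" for i j
    proof -
      have "e i < e j" using mono that by (simp add: strict_mono_less)
      then have "Min {e i, e j} = e i" "Max {e i, e j} = e j" by auto
      moreover have "f {e i, e j} = t" using Y(2) eY \<open>e i < e j\<close> by simp
      ultimately show ?thesis unfolding f_def by simp
    qed
    define D where "D = cls d Fs (segw ws (e 0) (e 1))"
    have inj: "inj_on hh (Qc d Fs)" using hh bij_betw_imp_inj_on by blast
    have Dc: "cls d Fs (segw ws (e i) (e j)) = D" if "i < j" for i j
      using inj_onD[OF inj, of "cls d Fs (segw ws (e i) (e j))" D] ft[OF that] ft[of 0 1]
      unfolding D_def by simp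
    have em: "e i \<le> e j" if "i \<le> j" for i j using mono that by (simp add: strict_mono_less_eq)
    have DQ: "D \<in> Qc d Fs" unfolding D_def by simp
    have DD: "cmul d Fs D D = D"
    proof -
      have "segw ws (e 0) (e 2) = segw ws (e 0) (e 1) @ segw ws (e 1) (e 2)"
        using em[of 0 1] em[of 1 2] by (intro segw_app) auto
      then have "cls d Fs (segw ws (e 0) (e 2)) = cmul d Fs (cls d Fs (segw ws (e 0) (e 1))) (cls d Fs (segw ws (e 1) (e 2)))"
        by (simp add: cmul_cls)
      then show ?thesis using Dc[of 0 2] Dc[of 0 1] Dc[of 1 2] by simp
    qed
    have DN: "D \<noteq> {[]}"
    proof
      assume D0: "D = {[]}"
      obtain i where i: "i \<ge> e 0" "ws i \<noteq> []" using ne by blast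
      have "Suc i \<le> e (Suc i)" using strict_mono_imp_increasing[OF mono] by blast
      then have "i \<in> set [e 0..<e (Suc i)]" using i by simp
      moreover have "segw ws (e 0) (e (Suc i)) = []"
        using Dc[of 0 "Suc i"] D0 cls_Nil[of d Fs] cls_Nil_iff[of d Fs "segw ws (e 0) (e (Suc i))" "[]"] by simp
      ultimately show False using i(2) unfolding segw_def by auto
    qed
    have Dn: "\<forall>x\<in>D. x \<noteq> []" using DQ DN Qc_nonNil by blast
    define C where "C = cmul d Fs (cls d Fs (pconc ws (e 0))) D"
    have CQ: "C \<in> Qc d Fs" unfolding C_def using DQ by (simp add: cmul_Qc)
    have CD: "cmul d Fs C D = C" unfolding C_def using DQ DD by (simp add: cmul_assoc)
    have cp: "(C, D) \<in> Cpairs d Fs" unfolding Cpairs_def using CQ DQ CD DD by simp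
    have pw: "pconc ws (e 1) \<in> C"
    proof -
      have "pconc ws (e 1) = pconc ws (e 0) @ segw ws (e 0) (e 1)"
        using segw_app[of 0 "e 0" "e 1" ws] em[of 0 1] by (simp add: pconc_segw)
      moreover have "segw ws (e 0) (e 1) \<in> D" unfolding D_def by (rule self_cls)
      ultimately show ?thesis unfolding C_def using DQ by (simp add: mem_cmul self_cls)
    qed
    have sw: "segw ws (e (Suc i)) (e (Suc (Suc i))) \<in> D" for i
      using Dc[of "Suc i" "Suc (Suc i)"] self_cls[of "segw ws (e (Suc i)) (e (Suc (Suc i)))" d Fs] by simp
    have Ce: "C = cls d Fs (pconc ws (e 1))" using Qc_mem[OF CQ pw] .
    have pu: "pconc us (e 1) \<in> C"
      using Ce segw_cls[OF eq, of 0 "e 1"] mem_of_cls[of d Fs "pconc us (e 1)" "pconc ws (e 1)"]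
      by (simp add: pconc_segw)
    have su: "segw us (e (Suc i)) (e (Suc (Suc i))) \<in> D" for i
      using Dc[of "Suc i" "Suc (Suc i)"] segw_cls[OF eq, of "e (Suc i)" "e (Suc (Suc i))"]
        mem_of_cls[of d Fs "segw us (e (Suc i)) (e (Suc (Suc i)))" "segw ws (e (Suc i)) (e (Suc (Suc i)))"]
      by simp
    have "inf_concat ws \<in> lconc C (omega_pow D)" using in_LL_group[OF ne mono pw sw Dn] .
    moreover have "inf_concat us \<in> lconc C (omega_pow D)" using in_LL_group[OF neu mono pu su Dn] .
    ultimately show ?thesis using cp by blast
  qed
qed


lemma omega_pow_mono: "A \<subseteq> B \<Longrightarrow> omega_pow A \<subseteq> omega_pow B"
  unfolding omega_pow_def by blast

lemma part5:
  fixes d :: "'s::finite \<Rightarrow> 'a \<Rightarrow> 's set"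
  shows "alpha_om d Fs (omega_pow U) = aomega d Fs (alpha_star d Fs U)"
proof
  let ?U = "gamma_star (alpha_star d Fs U)"
  have UU: "U \<subseteq> ?U" unfolding gamma_star_def alpha_star_def using self_cls cls_Qc by blast
  show "alpha_om d Fs (omega_pow U) \<subseteq> aomega d Fs (alpha_star d Fs U)"
    unfolding aomega_def alpha_om_def by (intro cc_mono ff_mono omega_pow_mono UU)
  have "cc d Fs (ff d Fs (omega_pow ?U)) \<subseteq> cc d Fs (ff d Fs (omega_pow U))"
  proof (rule cc_closed)
    show "ff d Fs (omega_pow ?U) \<subseteq> cc d Fs (ff d Fs (omega_pow U))"
    proof
      fix p assume "p \<in> ff d Fs (omega_pow ?U)"
      then obtain C D w where p: "p = (C, D)" "(C, D) \<in> Cpairs d Fs" "w \<in> lconc C (omega_pow D)" "w \<in> omega_pow ?U"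
        unfolding ff_def by auto
      then obtain ws where ws: "w = inf_concat ws" "\<forall>i. ws i \<in> ?U" unfolding omega_pow_def by blast
      have "\<forall>i. \<exists>u. u \<in> U \<and> cls d Fs u = cls d Fs (ws i)"
      proof
        fix i
        obtain X where X: "X \<in> Qc d Fs" "X \<inter> U \<noteq> {}" "ws i \<in> X"
          using ws(2) unfolding gamma_star_def alpha_star_def by blast
        then obtain u where u: "u \<in> X" "u \<in> U" by blast
        have "X = cls d Fs u" "X = cls d Fs (ws i)" using Qc_mem[OF X(1)] u X(3) by blast+
        then show "\<exists>u. u \<in> U \<and> cls d Fs u = cls d Fs (ws i)" using u by metis
      qed
      then obtain us where us: "\<forall>i. us i \<in> U \<and> cls d Fs (us i) = cls d Fs (ws i)" by metis
      then have eq: "\<forall>i. cls d Fs (ws i) = cls d Fs (us i)" by simp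
      obtain C' D' where q: "(C', D') \<in> Cpairs d Fs" "inf_concat ws \<in> lconc C' (omega_pow D')"
        "inf_concat us \<in> lconc C' (omega_pow D')"
        using ramsey_pair[OF eq] by blast
      have "inf_concat us \<in> omega_pow U" unfolding omega_pow_def using us by blast
      then have "(C', D') \<in> ff d Fs (omega_pow U)" unfolding ff_def using q by blast
      then have qc: "(C', D') \<in> cc d Fs (ff d Fs (omega_pow U))" using cc_incl[OF ff_sub] by blast
      have "ov (C', D') (C, D)" unfolding ov_def using q p ws by auto
      then show "p \<in> cc d Fs (ff d Fs (omega_pow U))" using cc_step[OF qc p(2)] p by simp
    qed
  next
    fix p q assume "p \<in> cc d Fs (ff d Fs (omega_pow U))" "q \<in> Cpairs d Fs" "ov p q"
    then show "q \<in> cc d Fs (ff d Fs (omega_pow U))" by (rule cc_step)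
  qed
  then show "aomega d Fs (alpha_star d Fs U) \<subseteq> alpha_om d Fs (omega_pow U)"
    unfolding aomega_def alpha_om_def .
qed


theorem theorem12:
  fixes d :: "'s::finite \<Rightarrow> 'a::finite \<Rightarrow> 's set" and q0 :: 's and Fs :: "'s set"
  shows
    "(alpha_star d Fs UNIV = Qc d Fs \<and> alpha_om d Fs UNIV = Cpairs d Fs \<and>
      alpha_star d Fs {} = {} \<and> alpha_om d Fs {} = {})
   \<and> (\<forall>U U'. alpha_star d Fs (U \<union> U') = alpha_star d Fs U \<union> alpha_star d Fs U')
   \<and> (\<forall>V V'. alpha_om d Fs (V \<union> V') = alpha_om d Fs V \<union> alpha_om d Fs V')
   \<and> (\<forall>U U'. alpha_star d Fs (lmul U U') = amul d Fs (alpha_star d Fs U) (alpha_star d Fs U'))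
   \<and> (\<forall>U V. alpha_om d Fs (lconc U V) = amul_om d Fs (alpha_star d Fs U) (alpha_om d Fs V))
   \<and> (\<forall>(\<Phi> :: ('n::finite \<Rightarrow> 'a list set) \<Rightarrow> ('n \<Rightarrow> 'a list set))
        (F :: ('n \<Rightarrow> 'a list set set) \<Rightarrow> ('n \<Rightarrow> 'a list set set)).
         mono \<Phi> \<longrightarrow>
         (\<forall>X. (\<forall>i. X i \<in> M_star d Fs) \<longrightarrow> (\<forall>i. F X i \<in> M_star d Fs)) \<longrightarrow>
         mono_on {X. \<forall>i. X i \<in> M_star d Fs} F \<longrightarrow>
         (\<forall>X. (\<lambda>i. alpha_star d Fs (\<Phi> X i)) = F (\<lambda>i. alpha_star d Fs (X i))) \<longrightarrow>
         (\<lambda>i. alpha_star d Fs (lfp \<Phi> i)) = Inf {X. (\<forall>i. X i \<in> M_star d Fs) \<and> F X \<le> X})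
   \<and> (\<forall>U. alpha_om d Fs (omega_pow U) = aomega d Fs (alpha_star d Fs U))"
  proof (intro conjI allI impI)
  show "alpha_star d Fs UNIV = Qc d Fs" by (rule part1a)
  show "alpha_om d Fs UNIV = Cpairs d Fs" by (rule part1b)
  show "alpha_star d Fs {} = {}" by (rule part1c)
  show "alpha_om d Fs {} = {}" by (rule part1d)
  show "alpha_star d Fs (U \<union> U') = alpha_star d Fs U \<union> alpha_star d Fs U'" for U U' by (rule part2a)
  show "alpha_om d Fs (V \<union> V') = alpha_om d Fs V \<union> alpha_om d Fs V'" for V V' by (rule part2b)
  show "alpha_star d Fs (lmul U U') = amul d Fs (alpha_star d Fs U) (alpha_star d Fs U')" for U U' by (rule part3a)
  show "alpha_om d Fs (lconc U V) = amul_om d Fs (alpha_star d Fs U) (alpha_om d Fs V)" for U V by (rule part3b)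
  show "alpha_om d Fs (omega_pow U) = aomega d Fs (alpha_star d Fs U)" for U by (rule part5)
next
  fix \<Phi> :: "('n::finite \<Rightarrow> 'a list set) \<Rightarrow> ('n \<Rightarrow> 'a list set)"
    and F :: "('n \<Rightarrow> 'a list set set) \<Rightarrow> ('n \<Rightarrow> 'a list set set)"
  assume "mono \<Phi>" "\<forall>X. (\<forall>i. X i \<in> M_star d Fs) \<longrightarrow> (\<forall>i. F X i \<in> M_star d Fs)"
    "mono_on {X. \<forall>i. X i \<in> M_star d Fs} F"
    "\<forall>X. (\<lambda>i. alpha_star d Fs (\<Phi> X i)) = F (\<lambda>i. alpha_star d Fs (X i))"
  then show "(\<lambda>i. alpha_star d Fs (lfp \<Phi> i)) = Inf {X. (\<forall>i. X i \<in> M_star d Fs) \<and> F X \<le> X}"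
    using part4 by blast
qed

end
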